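(* Let $n\geq 1$ with $n\not\equiv 2\pmod 4$. Then for every $i\in[n]$, $\Lambda(n,i)=\Lambda(n,n-i+1)$.
   Context: $\mathcal C_n^{+-}$ is the set of cyclic permutations $\pi=\pi_1\cdots\pi_n$ of $[n]$ (those consisting of a single $n$-cycle) that are unimodal, i.e. for which there is $e\in\{0,\dots,n\}$ with $\pi_1\cdots\pi_e$ increasing and $\pi_{e+1}\cdots\pi_n$ decreasing. $\Lambda(n,i)$ is the number of $\pi\in\mathcal C_n^{+-}$ with $\pi_i=n$. *)

theory Defs
  imports "HOL-Combinatorics.Permutations"
begin

definition cyclic_perm :: "nat \<Rightarrow> (nat \<Rightarrow> nat) \<Rightarrow> bool" where
  "cyclic_perm n p \<longleftrightarrow> p permutes {1..n} \<and> (\<forall>x\<in>{1..n}. \<exists>k. (p ^^ k) 1 = x)"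

definition unimodal_perm :: "nat \<Rightarrow> (nat \<Rightarrow> nat) \<Rightarrow> bool" where
  "unimodal_perm n p \<longleftrightarrow> (\<exists>e\<le>n.
      (\<forall>i j. 1 \<le> i \<and> i < j \<and> j \<le> e \<longrightarrow> p i < p j) \<and>
      (\<forall>i j. e + 1 \<le> i \<and> i < j \<and> j \<le> n \<longrightarrow> p i > p j))"

definition C_pm :: "nat \<Rightarrow> (nat \<Rightarrow> nat) set" where
  "C_pm n = {p. cyclic_perm n p \<and> unimodal_perm n p}"

definition Lambda :: "nat \<Rightarrow> nat \<Rightarrow> nat" where
  "Lambda n i = card {p \<in> C_pm n. p i = n}"

end

theory Submission
  imports Defs
begin


fun kk :: "(nat\<Rightarrow>nat) \<Rightarrow> (nat\<Rightarrow>bool) \<Rightarrow> nat \<Rightarrow> nat \<Rightarrow> nat" where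
  "kk f L a 0 = 0"
| "kk f L a (Suc N) = (if L a then 2^(Suc N) - 1 - kk f L (f a) N else kk f L (f a) N)"

lemma kk_lt: "kk f L a N < 2^N"
proof (induction N arbitrary: a)
  case (Suc N)
  have "kk f L (f a) N < 2^N" by (rule Suc.IH)
  then show ?case by auto
qed simp

lemma kk_top1: "L a \<Longrightarrow> 2^N \<le> kk f L a (Suc N)"
  using kk_lt[of f L "f a" N] by auto

lemma kk_top0: "\<not> L a \<Longrightarrow> kk f L a (Suc N) < 2^N"
  using kk_lt[of f L "f a" N] by auto

lemma kk_eq_iff: "kk f L a N = kk f L b N \<longleftrightarrow> (\<forall>j<N. L ((f^^j) a) = L ((f^^j) b))"
proof (induction N arbitrary: a b)
  case 0
  then show ?case by simp
next
  case (Suc N)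
  have sh: "(\<forall>j<Suc N. L ((f^^j) a) = L ((f^^j) b)) \<longleftrightarrow>
     L a = L b \<and> (\<forall>j<N. L ((f^^j) (f a)) = L ((f^^j) (f b)))"
    by (auto simp: funpow_Suc_right less_Suc_eq_0_disj simp del: funpow.simps)
  show ?case
  proof (cases "L a = L b")
    case True
    then show ?thesis using Suc.IH[of "f a" "f b"] kk_lt[of f L "f a" N] kk_lt[of f L "f b" N]
      unfolding sh by auto
  next
    case False
    then show ?thesis unfolding sh
      using kk_top1[of L a N f] kk_top0[of L a f N] kk_top1[of L b N f] kk_top0[of L b f N]
      by (cases "L a") auto
  qed
qed

lemma kk_less_Suc: "kk f L a N < kk f L b N \<Longrightarrow> kk f L a (Suc N) < kk f L b (Suc N)"
proof (induction N arbitrary: a b)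
  case 0
  then show ?case by simp
next
  case (Suc N)
  show ?case
  proof (cases "L a = L b")
    case True
    show ?thesis
    proof (cases "L a")
      case True
      with \<open>L a = L b\<close> Suc.prems have "kk f L (f b) N < kk f L (f a) N"
        using kk_lt[of f L "f a" N] kk_lt[of f L "f b" N] by auto
      from Suc.IH[OF this] True \<open>L a = L b\<close> show ?thesis
        using kk_lt[of f L "f a" "Suc N"] kk_lt[of f L "f b" "Suc N"] by auto
    next
      case False
      with \<open>L a = L b\<close> Suc.prems have "kk f L (f a) N < kk f L (f b) N" by auto
      from Suc.IH[OF this] False \<open>L a = L b\<close> show ?thesis by auto
    qed
  next
    case False
    show ?thesis
    proof (cases "L a")
      case True
      with False have "\<not> L b" by auto
      have "kk f L b (Suc N) < 2^N" using kk_top0[of L b f N] \<open>\<not> L b\<close> by simp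
      moreover have "2^N \<le> kk f L a (Suc N)" using kk_top1[of L a N f] True by simp
      ultimately show ?thesis using Suc.prems by simp
    next
      case F: False
      with False have "L b" by auto
      have "kk f L a (Suc (Suc N)) < 2^(Suc N)" using kk_top0[of L a f "Suc N"] F by simp
      moreover have "2^(Suc N) \<le> kk f L b (Suc (Suc N))" using kk_top1[of L b "Suc N" f] \<open>L b\<close> by simp
      ultimately show ?thesis by simp
    qed
  qed
qed

lemma kk_less_mono: "N \<le> M \<Longrightarrow> kk f L a N < kk f L b N \<Longrightarrow> kk f L a M < kk f L b M"
  by (induction M rule: dec_induct) (simp_all add: kk_less_Suc del: kk.simps)

definition good :: "nat \<Rightarrow> (nat\<Rightarrow>nat) \<Rightarrow> (nat\<Rightarrow>bool) \<Rightarrow> bool" where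
  "good n f L \<longleftrightarrow> (\<forall>x\<in>{1..n}. \<forall>y\<in>{1..n}. x < y \<longrightarrow>
      (L x \<longrightarrow> L y) \<and> (\<not> L x \<and> \<not> L y \<longrightarrow> f x < f y) \<and> (L x \<and> L y \<longrightarrow> f y < f x))"

lemma kk_mono:
  assumes g: "good n f L" and fS: "\<And>x. x \<in> {1..n} \<Longrightarrow> f x \<in> {1..n}"
  shows "x \<in> {1..n} \<Longrightarrow> y \<in> {1..n} \<Longrightarrow> x \<le> y \<Longrightarrow> kk f L x N \<le> kk f L y N"
proof (induction N arbitrary: x y)
  case 0
  then show ?case by simp
next
  case (Suc N)
  show ?case
  proof (cases "x = y")
    case True then show ?thesis by simp
  next
    case False
    with Suc.prems have xy: "x < y" by simp
    have gx: "(L x \<longrightarrow> L y) \<and> (\<not> L x \<and> \<not> L y \<longrightarrow> f x < f y) \<and> (L x \<and> L y \<longrightarrow> f y < f x)"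
      using g Suc.prems xy unfolding good_def by blast
    show ?thesis
    proof (cases "L x")
      case True
      with gx have "L y" "f y < f x" by auto
      then have "kk f L (f y) N \<le> kk f L (f x) N"
        using Suc.IH[of "f y" "f x"] fS Suc.prems by auto
      then show ?thesis using True \<open>L y\<close> kk_lt[of f L "f x" N] kk_lt[of f L "f y" N] by auto
    next
      case False
      show ?thesis
      proof (cases "L y")
        case True
        then show ?thesis using kk_top0[of L x f N] kk_top1[of L y N f] False True by simp
      next
        case F2: False
        with gx False have "f x < f y" by auto
        then have "kk f L (f x) N \<le> kk f L (f y) N"
          using Suc.IH[of "f x" "f y"] fS Suc.prems by auto
        then show ?thesis using False F2 by auto
      qed
    qed
  qed
qed

lemma kk_conj:
  assumes "\<And>x. x \<in> S \<Longrightarrow> f x \<in> S" "\<And>x. x \<in> S \<Longrightarrow> g (r x) = r (f x)"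
    "\<And>x. x \<in> S \<Longrightarrow> M (r x) = L x"
  shows "a \<in> S \<Longrightarrow> kk g M (r a) N = kk f L a N"
  by (induction N arbitrary: a) (auto simp: assms)



lemma funpow_comm: "(f^^i) ((f^^j) x) = (f^^(i+j)) x"
  by (simp add: funpow_add)

locale cyc =
  fixes n :: nat and p :: "nat \<Rightarrow> nat"
  assumes cp: "cyclic_perm n p" and n1: "1 \<le> n"
begin

lemma perm: "p permutes {1..n}" using cp unfolding cyclic_perm_def by auto

lemma inj_pow: "inj (p^^k)"
  using inj_fn permutes_inj[OF perm] by blast

lemma pow_in: "x \<in> {1..n} \<Longrightarrow> (p^^k) x \<in> {1..n}"
  using permutes_in_funpow_image[OF perm] by blast

lemma p_in: "x \<in> {1..n} \<Longrightarrow> p x \<in> {1..n}"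
  using permutes_in_image[OF perm] by blast

lemma orb: "x \<in> {1..n} \<Longrightarrow> \<exists>k. (p^^k) 1 = x"
  using cp unfolding cyclic_perm_def by auto

definition P where "P = (LEAST k. 0 < k \<and> (p^^k) 1 = 1)"

lemma P_ex: "\<exists>k. 0 < k \<and> (p^^k) 1 = 1"
proof -
  have "permutation p" using perm permutation_permutes by blast
  then obtain k where "k > 0" "(p^^k) 1 = 1" by (rule permutation_self)
  then show ?thesis by blast
qed

lemma P_pos: "0 < P" and P_fix: "(p^^P) 1 = 1"
  using LeastI_ex[OF P_ex] unfolding P_def by auto

lemma P_min: "0 < k \<Longrightarrow> (p^^k) 1 = 1 \<Longrightarrow> P \<le> k"
  unfolding P_def by (rule Least_le) simp

lemma inj_P: "inj_on (\<lambda>k. (p^^k) 1) {..<P}"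
proof (rule inj_onI)
  fix i j assume i: "i \<in> {..<P}" and j: "j \<in> {..<P}" and e: "(p^^i) 1 = (p^^j) 1"
  show "i = j"
  proof (rule ccontr)
    assume "i \<noteq> j"
    then consider "i < j" | "j < i" by linarith
    then show False
    proof cases
      case 1
      have "(p^^i) ((p^^(j-i)) 1) = (p^^i) 1" using e 1 by (simp add: funpow_comm)
      then have "(p^^(j-i)) 1 = 1" using inj_pow[of i] by (simp add: inj_eq)
      then have "P \<le> j - i" using 1 P_min by simp
      then show False using j by simp
    next
      case 2
      have "(p^^j) ((p^^(i-j)) 1) = (p^^j) 1" using e 2 by (simp add: funpow_comm)
      then have "(p^^(i-j)) 1 = 1" using inj_pow[of j] by (simp add: inj_eq)
      then have "P \<le> i - j" using 2 P_min by simp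
      then show False using i by simp
    qed
  qed
qed

lemma P_eq: "P = n"
proof -
  let ?A = "(\<lambda>k. (p^^k) 1) ` {..<P}"
  have sub1: "?A \<subseteq> {1..n}" using pow_in n1 by auto
  have c1: "card ?A \<le> card {1..n}" by (rule card_mono[OF finite_atLeastAtMost sub1])
  have cA: "card ?A = P" using card_image[OF inj_P] by simp
  have sub2: "{1..n} \<subseteq> ?A"
  proof
    fix x assume "x \<in> {1..n}"
    then obtain k where k: "(p^^k) 1 = x" using orb by blast
    have "(p^^(k mod P)) 1 = (p^^k) 1" by (rule funpow_mod_eq[OF P_fix])
    then have "(p^^(k mod P)) 1 = x" using k by simp
    moreover have "k mod P \<in> {..<P}" using P_pos by simp
    ultimately show "x \<in> ?A" by (rule image_eqI[OF sym])
  qed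
  have c2: "card {1..n} \<le> card ?A" by (rule card_mono[OF finite_imageI[OF finite_lessThan] sub2])
  show ?thesis using c1 c2 cA by simp
qed

lemma one_in: "1 \<in> {1..n}" using n1 by simp

lemma Pn_fix: "(p^^n) 1 = 1" using P_fix P_eq by simp

lemma ex_time: "x \<in> {1..n} \<Longrightarrow> \<exists>s<n. (p^^s) 1 = x"
proof -
  assume "x \<in> {1..n}"
  then obtain k where k: "(p^^k) 1 = x" using orb by blast
  have "(p^^(k mod n)) 1 = (p^^k) 1" by (rule funpow_mod_eq[OF Pn_fix])
  then have "(p^^(k mod n)) 1 = x" using k by simp
  moreover have "k mod n < n" using n1 by simp
  ultimately show ?thesis by blast
qed

lemma fix_iff: "x \<in> {1..n} \<Longrightarrow> (p^^k) x = x \<longleftrightarrow> (p^^k) 1 = 1"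
proof -
  assume "x \<in> {1..n}"
  then obtain s where s: "(p^^s) 1 = x" using orb by blast
  have "(p^^k) x = (p^^s) ((p^^k) 1)" unfolding s[symmetric] funpow_comm by (simp add: add.commute)
  then have "(p^^k) x = x \<longleftrightarrow> (p^^s) ((p^^k) 1) = (p^^s) 1" using s by simp
  also have "\<dots> \<longleftrightarrow> (p^^k) 1 = 1" by (rule inj_eq[OF inj_pow])
  finally show ?thesis .
qed

lemma period: "x \<in> {1..n} \<Longrightarrow> (p^^n) x = x"
  using fix_iff[of x n] Pn_fix by blast

lemma fix_dvd: "x \<in> {1..n} \<Longrightarrow> (p^^k) x = x \<Longrightarrow> n dvd k"
proof -
  assume x: "x \<in> {1..n}" and "(p^^k) x = x"
  then have k1: "(p^^k) 1 = 1" using fix_iff[OF x, of k] by blast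
  have "(p^^(k mod n)) 1 = (p^^k) 1" by (rule funpow_mod_eq[OF Pn_fix])
  then have e: "(p^^(k mod n)) 1 = 1" using k1 by simp
  have "k mod n = 0"
  proof (rule ccontr)
    assume "k mod n \<noteq> 0"
    then have "P \<le> k mod n" using P_min e by simp
    moreover have "k mod n < n" using n1 by simp
    ultimately show False using P_eq by simp
  qed
  then show ?thesis by auto
qed

lemma pow_mod: "x \<in> {1..n} \<Longrightarrow> (p^^(k mod n)) x = (p^^k) x"
  by (rule funpow_mod_eq[OF period])

lemma connect: "x \<in> {1..n} \<Longrightarrow> y \<in> {1..n} \<Longrightarrow> \<exists>t<n. (p^^t) x = y"
proof -
  assume x: "x \<in> {1..n}" and y: "y \<in> {1..n}"
  obtain s where s: "s < n" "(p^^s) 1 = x" using ex_time[OF x] by blast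
  obtain u where u: "u < n" "(p^^u) 1 = y" using ex_time[OF y] by blast
  have "(p^^(u + (n - s))) x = (p^^(u + (n - s))) ((p^^s) 1)" using s(2) by simp
  also have "\<dots> = (p^^(u + n)) 1" using s(1) by (simp add: funpow_comm)
  also have "\<dots> = (p^^u) ((p^^n) 1)" by (simp add: funpow_comm)
  also have "\<dots> = y" using period[OF one_in] u(2) by simp
  finally have "(p^^((u + (n - s)) mod n)) x = y" using pow_mod[OF x] by simp
  then show ?thesis using n1 by (intro exI[of _ "(u + (n - s)) mod n"]) auto
qed

lemma bij_time: "x \<in> {1..n} \<Longrightarrow> bij_betw (\<lambda>j. (p^^j) x) {..<n} {1..n}"
proof -
  assume x: "x \<in> {1..n}"
  have *: False if ab: "a < b" "b < n" "(p^^a) x = (p^^b) x" for a b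
  proof -
    have "(p^^a) ((p^^(b-a)) x) = (p^^b) x" using ab(1) by (simp add: funpow_comm)
    then have "(p^^a) ((p^^(b-a)) x) = (p^^a) x" using ab(3) by simp
    then have "(p^^(b-a)) x = x" using inj_pow[of a] by (simp add: inj_eq)
    then have "n dvd (b - a)" using fix_dvd[OF x] by blast
    then have "n \<le> b - a" using ab(1) by (intro dvd_imp_le) auto
    then show False using ab(2) by simp
  qed
  have inj: "inj_on (\<lambda>j. (p^^j) x) {..<n}"
  proof (rule inj_onI)
    fix i j assume i: "i \<in> {..<n}" and j: "j \<in> {..<n}" and e: "(p^^i) x = (p^^j) x"
    show "i = j"
    proof (rule ccontr)
      assume ne: "i \<noteq> j"
      then consider "i < j" | "j < i" by linarith
      then show False
      proof cases
        case 1 then show False using *[of i j] e j by simp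
      next
        case 2 then show False using *[of j i] e i by simp
      qed
    qed
  qed
  have sub: "(\<lambda>j. (p^^j) x) ` {..<n} \<subseteq> {1..n}" using pow_in[OF x] by auto
  have "card ((\<lambda>j. (p^^j) x) ` {..<n}) = card {1..n}" using card_image[OF inj] by simp
  then have "(\<lambda>j. (p^^j) x) ` {..<n} = {1..n}"
    using card_subset_eq[OF finite_atLeastAtMost sub] by simp
  then show ?thesis unfolding bij_betw_def using inj by simp
qed

end


fun pw :: "(nat\<Rightarrow>nat) \<Rightarrow> (nat\<Rightarrow>bool) \<Rightarrow> nat \<Rightarrow> nat \<Rightarrow> bool" where
  "pw f L x 0 = False"
| "pw f L x (Suc k) = (pw f L x k \<noteq> L ((f^^k) x))"

lemma pw_add: "pw f L x (a + b) = (pw f L x a \<noteq> pw f L ((f^^a) x) b)"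
  by (induction b) (auto simp: funpow_comm add.commute)

lemma pw_cong: "(\<And>j. j < k \<Longrightarrow> L ((f^^j) x) = L ((f^^j) y)) \<Longrightarrow> pw f L x k = pw f L y k"
  by (induction k) auto

definition sameit :: "(nat\<Rightarrow>nat) \<Rightarrow> (nat\<Rightarrow>bool) \<Rightarrow> nat \<Rightarrow> nat \<Rightarrow> bool" where
  "sameit f L x y \<longleftrightarrow> (\<forall>j. L ((f^^j) x) = L ((f^^j) y))"

locale cycg = cyc +
  fixes L :: "nat \<Rightarrow> bool"
  assumes gd: "good n p L"
begin

lemma good_dir: "x \<in> {1..n} \<Longrightarrow> y \<in> {1..n} \<Longrightarrow> x \<noteq> y \<Longrightarrow> L x = L y \<Longrightarrow>
    (p x < p y \<longleftrightarrow> ((x < y) \<noteq> L x))"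
proof -
  assume x: "x \<in> {1..n}" and y: "y \<in> {1..n}" and ne: "x \<noteq> y" and l: "L x = L y"
  have inj: "p x \<noteq> p y" using ne permutes_inj[OF perm] by (auto simp: inj_eq)
  consider "x < y" | "y < x" using ne by linarith
  then show ?thesis
  proof cases
    case 1
    have g: "(L x \<longrightarrow> L y) \<and> (\<not> L x \<and> \<not> L y \<longrightarrow> p x < p y) \<and> (L x \<and> L y \<longrightarrow> p y < p x)"
      using gd x y 1 unfolding good_def by blast
    then show ?thesis using 1 l inj by (cases "L x") auto
  next
    case 2
    have g: "(L y \<longrightarrow> L x) \<and> (\<not> L y \<and> \<not> L x \<longrightarrow> p y < p x) \<and> (L y \<and> L x \<longrightarrow> p x < p y)"
      using gd x y 2 unfolding good_def by blast
    then show ?thesis using 2 l inj by (cases "L x") auto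
  qed
qed

lemma sameit_sym: "sameit p L x y \<Longrightarrow> sameit p L y x"
  unfolding sameit_def by simp

lemma sameit_trans: "sameit p L x y \<Longrightarrow> sameit p L y z \<Longrightarrow> sameit p L x z"
  unfolding sameit_def by simp

lemma sameit_pow: "sameit p L x y \<Longrightarrow> sameit p L ((p^^t) x) ((p^^t) y)"
  unfolding sameit_def by (simp add: funpow_comm)

lemma mono_pow:
  assumes x: "x \<in> {1..n}" and y: "y \<in> {1..n}" and ne: "x \<noteq> y" and s: "sameit p L x y"
  shows "(p^^k) x < (p^^k) y \<longleftrightarrow> ((x < y) \<noteq> pw p L x k)"
proof (induction k)
  case 0
  then show ?case by simp
next
  case (Suc k)
  let ?u = "(p^^k) x" and ?v = "(p^^k) y"
  have u: "?u \<in> {1..n}" and v: "?v \<in> {1..n}" using pow_in x y by auto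
  have uv: "?u \<noteq> ?v" using ne inj_pow[of k] by (auto simp: inj_eq)
  have l: "L ?u = L ?v" using s unfolding sameit_def by blast
  have "(p^^Suc k) x < (p^^Suc k) y \<longleftrightarrow> p ?u < p ?v" by simp
  also have "\<dots> \<longleftrightarrow> ((?u < ?v) \<noteq> L ?u)" by (rule good_dir[OF u v uv l])
  finally show ?case using Suc.IH by auto
qed

lemma pow_mult_n: "x \<in> {1..n} \<Longrightarrow> (p^^(m * n)) x = x"
proof -
  assume x: "x \<in> {1..n}"
  have "(p^^((m * n) mod n)) x = (p^^(m*n)) x" by (rule pow_mod[OF x])
  then show ?thesis by simp
qed

lemma chain:
  assumes X: "X \<subseteq> {1..n}" and a: "a \<in> X"
    and inv: "\<And>y. y \<in> X \<Longrightarrow> (p^^s) y \<in> X"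
    and inc: "\<And>y z. y \<in> X \<Longrightarrow> z \<in> X \<Longrightarrow> y < z \<Longrightarrow> (p^^s) y < (p^^s) z"
  shows "(p^^s) a = a"
proof (rule ccontr)
  assume ne: "(p^^s) a \<noteq> a"
  have inX: "(p^^(m*s)) a \<in> X" for m
  proof (induction m)
    case 0 then show ?case using a by simp
  next
    case (Suc m)
    have "(p^^(Suc m * s)) a = (p^^s) ((p^^(m*s)) a)" by (simp add: funpow_comm add.commute)
    then show ?case using inv[OF Suc.IH] by simp
  qed
  have step: "(p^^(Suc m * s)) a = (p^^s) ((p^^(m*s)) a)" for m
    by (simp add: funpow_comm add.commute)
  have bk: "(p^^(n * s)) a = a"
    using pow_mult_n[of a s] a X by (auto simp: mult.commute)
  consider "a < (p^^s) a" | "(p^^s) a < a" using ne by linarith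
  then show False
  proof cases
    case 1
    have st: "(p^^(m*s)) a < (p^^(Suc m * s)) a" for m
    proof (induction m)
      case 0 then show ?case using 1 by simp
    next
      case (Suc m)
      have "(p^^s) ((p^^(m*s)) a) < (p^^s) ((p^^(Suc m*s)) a)"
        using inc[OF inX inX Suc.IH] .
      then show ?case using step[of m] step[of "Suc m"] by simp
    qed
    have "a < (p^^(Suc m * s)) a" for m
    proof (induction m)
      case 0 then show ?case using st[of 0] by simp
    next
      case (Suc m) then show ?case using st[of "Suc m"] by simp
    qed
    then have "a < (p^^(n * s)) a" using n1 by (metis Suc_pred' less_le_trans not_le not_one_le_zero)
    then show False using bk by simp
  next
    case 2
    have st: "(p^^(Suc m * s)) a < (p^^(m*s)) a" for m
    proof (induction m)
      case 0 then show ?case using 2 by simp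
    next
      case (Suc m)
      have "(p^^s) ((p^^(Suc m*s)) a) < (p^^s) ((p^^(m*s)) a)"
        using inc[OF inX inX Suc.IH] .
      then show ?case using step[of m] step[of "Suc m"] by simp
    qed
    have "(p^^(Suc m * s)) a < a" for m
    proof (induction m)
      case 0 then show ?case using st[of 0] by simp
    next
      case (Suc m) then show ?case using st[of "Suc m"] by simp
    qed
    then have "(p^^(n * s)) a < a" using n1 by (metis Suc_pred' less_le_trans not_le not_one_le_zero)
    then show False using bk by simp
  qed
qed

lemma tie:
  assumes a: "a \<in> {1..n}" and t: "0 < t" "t < n" and ne: "(p^^t) a \<noteq> a"
    and s: "sameit p L a ((p^^t) a)"
  shows "2 * t = n \<and> pw p L a t"
proof -
  define X where "X = {y \<in> {1..n}. sameit p L y a}"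
  have aX: "a \<in> X" using a unfolding X_def sameit_def by simp
  have XS: "X \<subseteq> {1..n}" unfolding X_def by auto
  have inv: "(p^^t) y \<in> X" if "y \<in> X" for y
  proof -
    have "sameit p L ((p^^t) y) ((p^^t) a)" using that sameit_pow unfolding X_def by blast
    then have "sameit p L ((p^^t) y) a" using sameit_trans sameit_sym s by blast
    then show ?thesis using that pow_in unfolding X_def by blast
  qed
  have pwX: "pw p L y t = pw p L a t" if "y \<in> X" for y
    using that unfolding X_def sameit_def by (intro pw_cong) auto
  have dir: "(p^^t) y < (p^^t) z \<longleftrightarrow> ((y < z) \<noteq> pw p L a t)" if "y \<in> X" "z \<in> X" "y \<noteq> z" for y z
  proof -
    have "sameit p L y z" using that sameit_trans sameit_sym unfolding X_def by blast
    moreover have "y \<in> {1..n}" "z \<in> {1..n}" using that XS by auto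
    ultimately show ?thesis using mono_pow[of y z t] that pwX by simp
  qed
  have pwt: "pw p L a t"
  proof (rule ccontr)
    assume np: "\<not> pw p L a t"
    have "(p^^t) a = a"
      by (rule chain[OF XS aX inv]) (use dir np in auto)
    then show False using ne by simp
  qed
  have inv2: "(p^^(t+t)) y \<in> X" if "y \<in> X" for y
    using inv[OF inv[OF that]] by (simp add: funpow_comm)
  have inc2: "(p^^(t+t)) y < (p^^(t+t)) z" if "y \<in> X" "z \<in> X" "y < z" for y z
  proof -
    have "(p^^t) y \<noteq> (p^^t) z" using that(3) inj_pow[of t] by (auto simp: inj_eq)
    then have "(p^^t) z < (p^^t) y" using dir[of y z] that pwt by auto
    moreover have "(p^^t) z \<noteq> (p^^t) y" using calculation by simp
    moreover have "(p^^t) ((p^^t) y) \<noteq> (p^^t) ((p^^t) z)"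
      using calculation(2) inj_pow[of t] by (auto simp: inj_eq)
    ultimately have "(p^^t) ((p^^t) y) < (p^^t) ((p^^t) z)"
      using dir[of "(p^^t) z" "(p^^t) y"] inv that pwt by auto
    then show ?thesis by (simp add: funpow_comm)
  qed
  have "(p^^(t+t)) a = a" by (rule chain[OF XS aX inv2 inc2])
  then have "n dvd (t + t)" using fix_dvd[OF a] by blast
  then obtain c where c: "t + t = n * c" by (auto simp: dvd_def)
  have "c = 1"
  proof -
    have "0 < c" using c t by (cases c) auto
    moreover have "c < 2" using c t by (cases "c \<ge> 2") (auto dest: mult_le_mono2[of 2 c n])
    ultimately show ?thesis by linarith
  qed
  then show ?thesis using c pwt by simp
qed

end


lemma mono_bij_unique:
  fixes f g :: "nat \<Rightarrow> nat"
  assumes fin: "finite Y" and bf: "bij_betw f X Y" and bg: "bij_betw g X Y"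
    and mf: "\<And>y z. y \<in> X \<Longrightarrow> z \<in> X \<Longrightarrow> y < z \<Longrightarrow> (if d then f y < f z else f z < f y)"
    and mg: "\<And>y z. y \<in> X \<Longrightarrow> z \<in> X \<Longrightarrow> y < z \<Longrightarrow> (if d then g y < g z else g z < g y)"
    and x: "x \<in> X"
  shows "f x = g x"
proof -
  define R where "R = (\<lambda>u w::nat. if d then u < w else w < u)"
  have finX: "finite X" using bf fin bij_betw_finite by blast
  have rank: "card {w \<in> Y. R w (h x)} = card {z \<in> X. z < x}"
    if bh: "bij_betw h X Y" and mh: "\<And>y z. y \<in> X \<Longrightarrow> z \<in> X \<Longrightarrow> y < z \<Longrightarrow> R (h y) (h z)" for h
  proof -
    have "{w \<in> Y. R w (h x)} = h ` {z \<in> X. z < x}"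
    proof
      show "{w \<in> Y. R w (h x)} \<subseteq> h ` {z \<in> X. z < x}"
      proof
        fix w assume w: "w \<in> {w \<in> Y. R w (h x)}"
        then obtain z where z: "z \<in> X" "w = h z" using bh unfolding bij_betw_def by auto
        have "z < x"
        proof (rule ccontr)
          assume "\<not> z < x"
          then have "x = z \<or> x < z" by linarith
          then show False using mh[OF x z(1)] w z unfolding R_def by (auto split: if_splits)
        qed
        then show "w \<in> h ` {z \<in> X. z < x}" using z by auto
      qed
    next
      show "h ` {z \<in> X. z < x} \<subseteq> {w \<in> Y. R w (h x)}"
        using mh x bh unfolding bij_betw_def by auto
    qed
    moreover have "inj_on h {z \<in> X. z < x}" using bh unfolding bij_betw_def by (auto intro: inj_on_subset)
    ultimately show ?thesis using card_image[of h "{z \<in> X. z < x}"] by simp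
  qed
  have rf: "card {w \<in> Y. R w (f x)} = card {z \<in> X. z < x}"
    by (rule rank[OF bf]) (use mf in \<open>auto simp: R_def\<close>)
  have rg: "card {w \<in> Y. R w (g x)} = card {z \<in> X. z < x}"
    by (rule rank[OF bg]) (use mg in \<open>auto simp: R_def\<close>)
  have fY: "f x \<in> Y" and gY: "g x \<in> Y" using bf bg x unfolding bij_betw_def by auto
  have trans: "R u v \<Longrightarrow> R v w \<Longrightarrow> R u w" for u v w unfolding R_def by (auto split: if_splits)
  have irr: "\<not> R u u" for u unfolding R_def by auto
  have lin: "u = v \<or> R u v \<or> R v u" for u v unfolding R_def by auto
  have sub: "card {w \<in> Y. R w u} < card {w \<in> Y. R w v}" if "R u v" "u \<in> Y" for u v
  proof (rule psubset_card_mono)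
    show "finite {w \<in> Y. R w v}" using fin by simp
    show "{w \<in> Y. R w u} \<subset> {w \<in> Y. R w v}"
      using that trans irr by blast
  qed
  show ?thesis
  proof (rule ccontr)
    assume "f x \<noteq> g x"
    then have "R (f x) (g x) \<or> R (g x) (f x)" using lin by blast
    then show False using sub[of "f x" "g x"] sub[of "g x" "f x"] fY gY rf rg by auto
  qed
qed

lemma count_le:
  fixes F :: "nat \<Rightarrow> nat"
  assumes mono: "\<And>x y. x \<in> {1..n} \<Longrightarrow> y \<in> {1..n} \<Longrightarrow> x \<le> y \<Longrightarrow> F x \<le> F y"
    and y: "y \<in> {1..n}"
  shows "F y \<le> v \<longleftrightarrow> y \<le> card {x \<in> {1..n}. F x \<le> v}"
proof
  assume "F y \<le> v"
  then have "{1..y} \<subseteq> {x \<in> {1..n}. F x \<le> v}" using mono y by fastforce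
  then have "card {1..y} \<le> card {x \<in> {1..n}. F x \<le> v}" by (intro card_mono) auto
  then show "y \<le> card {x \<in> {1..n}. F x \<le> v}" by simp
next
  assume a: "y \<le> card {x \<in> {1..n}. F x \<le> v}"
  show "F y \<le> v"
  proof (rule ccontr)
    assume "\<not> F y \<le> v"
    then have "{x \<in> {1..n}. F x \<le> v} \<subseteq> {1..<y}"
      using mono y by (auto simp: not_le) (meson le_trans not_le)
    then have "card {x \<in> {1..n}. F x \<le> v} \<le> card {1..<y}" by (intro card_mono) auto
    then show False using a y by auto
  qed
qed

context cycg
begin

abbreviation kp where "kp x \<equiv> kk p L x n"

lemma kp_mono: "x \<in> {1..n} \<Longrightarrow> y \<in> {1..n} \<Longrightarrow> x \<le> y \<Longrightarrow> kp x \<le> kp y"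
  by (rule kk_mono[OF gd p_in])

lemma kp_eq_sameit: "kp x = kp y \<longleftrightarrow> sameit p L x y" if "x \<in> {1..n}" "y \<in> {1..n}"
proof
  assume "kp x = kp y"
  then have j: "\<forall>j<n. L ((p^^j) x) = L ((p^^j) y)" using kk_eq_iff by blast
  show "sameit p L x y" unfolding sameit_def
  proof
    fix j
    have "L ((p^^(j mod n)) x) = L ((p^^(j mod n)) y)" using j n1 by simp
    then show "L ((p^^j) x) = L ((p^^j) y)" using pow_mod that by simp
  qed
next
  assume "sameit p L x y"
  then show "kp x = kp y" unfolding sameit_def using kk_eq_iff by blast
qed

lemma kp_top: "x \<in> {1..n} \<Longrightarrow> L x \<longleftrightarrow> 2^(n-1) \<le> kp x"
proof -
  have nn: "n = Suc (n-1)" using n1 by simp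
  show ?thesis
    using kk_top1[of L x "n-1" p] kk_top0[of L x p "n-1"] nn by (metis not_le)
qed

lemma kp_shift: "x \<in> {1..n} \<Longrightarrow> y \<in> {1..n} \<Longrightarrow> kp x = kp y \<Longrightarrow> kp (p x) = kp (p y)"
  using kp_eq_sameit sameit_pow[of x y 1] p_in by simp

end

locale cycU = cycg +
  fixes q :: "nat \<Rightarrow> nat" and M :: "nat \<Rightarrow> bool" and r :: "nat \<Rightarrow> nat"
  assumes qperm: "q permutes {1..n}" and qgood: "good n q M"
    and rbij: "bij_betw r {1..n} {1..n}"
    and conjq: "\<And>a. a \<in> {1..n} \<Longrightarrow> q (r a) = r (p a)"
    and conjM: "\<And>a. a \<in> {1..n} \<Longrightarrow> M (r a) = L a"
begin

lemma q_in: "x \<in> {1..n} \<Longrightarrow> q x \<in> {1..n}"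
  using permutes_in_image[OF qperm] by blast

abbreviation kq where "kq x \<equiv> kk q M x n"

lemma r_in: "a \<in> {1..n} \<Longrightarrow> r a \<in> {1..n}" using rbij unfolding bij_betw_def by auto

lemma rinv: "y \<in> {1..n} \<Longrightarrow> \<exists>z\<in>{1..n}. y = r z"
proof -
  assume "y \<in> {1..n}"
  then have "y \<in> r ` {1..n}" using rbij unfolding bij_betw_def by simp
  then show ?thesis by blast
qed

lemma kq_r: "a \<in> {1..n} \<Longrightarrow> kq (r a) = kp a"
  by (rule kk_conj[of "{1..n}" p q r M L]) (use p_in conjq conjM in blast)+

lemma kq_mono: "x \<in> {1..n} \<Longrightarrow> y \<in> {1..n} \<Longrightarrow> x \<le> y \<Longrightarrow> kq x \<le> kq y"
  by (rule kk_mono[OF qgood q_in])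

lemma count_eq: "card {x \<in> {1..n}. kp x \<le> v} = card {y \<in> {1..n}. kq y \<le> v}"
proof -
  have "r ` {x \<in> {1..n}. kp x \<le> v} = {y \<in> {1..n}. kq y \<le> v}"
  proof
    show "r ` {x \<in> {1..n}. kp x \<le> v} \<subseteq> {y \<in> {1..n}. kq y \<le> v}"
      using kq_r r_in by auto
  next
    show "{y \<in> {1..n}. kq y \<le> v} \<subseteq> r ` {x \<in> {1..n}. kp x \<le> v}"
    proof
      fix y assume y: "y \<in> {y \<in> {1..n}. kq y \<le> v}"
      then obtain x where x: "x \<in> {1..n}" "y = r x" using rinv by blast
      then show "y \<in> r ` {x \<in> {1..n}. kp x \<le> v}" using y kq_r by auto
    qed
  qed
  moreover have "inj_on r {x \<in> {1..n}. kp x \<le> v}"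
    using rbij unfolding bij_betw_def by (auto intro: inj_on_subset)
  ultimately show ?thesis using card_image[of r "{x \<in> {1..n}. kp x \<le> v}"] by simp
qed

lemma kq_eq: "y \<in> {1..n} \<Longrightarrow> kq y = kp y"
proof -
  assume y: "y \<in> {1..n}"
  have "kq y \<le> v \<longleftrightarrow> kp y \<le> v" for v
  proof -
    have 1: "kq y \<le> v \<longleftrightarrow> y \<le> card {x \<in> {1..n}. kq x \<le> v}"
      by (rule count_le[of n kq y v, OF kq_mono y]) auto
    have 2: "kp y \<le> v \<longleftrightarrow> y \<le> card {x \<in> {1..n}. kp x \<le> v}"
      by (rule count_le[of n kp y v, OF kp_mono y]) auto
    show ?thesis unfolding 1 2 count_eq[of v] ..
  qed
  then have "kq y \<le> kp y" "kp y \<le> kq y" by blast+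
  then show ?thesis by simp
qed

lemma M_eq: "y \<in> {1..n} \<Longrightarrow> M y = L y"
proof -
  assume y: "y \<in> {1..n}"
  have nn: "n = Suc (n-1)" using n1 by simp
  have "M y \<longleftrightarrow> 2^(n-1) \<le> kq y"
    using kk_top1[of M y "n-1" q] kk_top0[of M y q "n-1"] nn by (metis not_le)
  then show ?thesis using kp_top[OF y] kq_eq[OF y] by simp
qed


lemma kq_shift: "x \<in> {1..n} \<Longrightarrow> kp (q x) = kp (p x)"
proof -
  assume x: "x \<in> {1..n}"
  obtain z where z: "z \<in> {1..n}" "x = r z" using rinv[OF x] by blast
  have "kp z = kq (r z)" using kq_r[OF z(1)] by simp
  also have "\<dots> = kp (r z)" using kq_eq[OF r_in[OF z(1)]] .
  finally have e: "kp z = kp (r z)" .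
  have pz: "p z \<in> {1..n}" using p_in[OF z(1)] .
  have 1: "kp (q x) = kq (q x)" using kq_eq[OF q_in[OF x]] by simp
  have 2: "q x = r (p z)" using z conjq by simp
  have 3: "kq (r (p z)) = kp (p z)" by (rule kq_r[OF pz])
  have 4: "kp (p z) = kp (p (r z))" by (rule kp_shift[OF z(1) r_in[OF z(1)] e])
  show ?thesis using 1 2 3 4 z(2) by simp
qed

lemma kq_shift2: "x \<in> {1..n} \<Longrightarrow> y \<in> {1..n} \<Longrightarrow> kp x = kp y \<Longrightarrow> kp (q x) = kp (q y)"
proof -
  assume x: "x \<in> {1..n}" and y: "y \<in> {1..n}" and e: "kp x = kp y"
  have "kp (q x) = kp (p x)" by (rule kq_shift[OF x])
  also have "\<dots> = kp (p y)" by (rule kp_shift[OF x y e])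
  also have "\<dots> = kp (q y)" by (rule kq_shift[OF y, symmetric])
  finally show ?thesis .
qed

lemma q_eq: "x \<in> {1..n} \<Longrightarrow> q x = p x"
proof -
  assume x: "x \<in> {1..n}"
  define X where "X = {y \<in> {1..n}. kp y = kp x}"
  define Y where "Y = {y \<in> {1..n}. kp y = kp (p x)}"
  have xX: "x \<in> X" using x unfolding X_def by simp
  have pXY: "p ` X \<subseteq> Y"
  proof
    fix w assume "w \<in> p ` X"
    then obtain y where y: "y \<in> {1..n}" "kp y = kp x" "w = p y" unfolding X_def by auto
    have "kp (p y) = kp (p x)" by (rule kp_shift[OF y(1) x y(2)])
    then show "w \<in> Y" unfolding Y_def using y p_in by simp
  qed
  have qXY: "q ` X \<subseteq> Y"
  proof
    fix w assume "w \<in> q ` X"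
    then obtain y where y: "y \<in> {1..n}" "kp y = kp x" "w = q y" unfolding X_def by auto
    have "kp (q y) = kp (q x)" by (rule kq_shift2[OF y(1) x y(2)])
    also have "\<dots> = kp (p x)" by (rule kq_shift[OF x])
    finally show "w \<in> Y" unfolding Y_def using y q_in by simp
  qed
  have finY: "finite Y" unfolding Y_def by simp
  have finX: "finite X" unfolding X_def by simp
  have injp: "inj_on p X" using permutes_inj_on[OF perm] .
  have injq: "inj_on q X" using permutes_inj_on[OF qperm] .
  have c1: "card X \<le> card Y" using card_inj_on_le[OF injp pXY finY] .
  have bk: "(p^^(n-1)) ` Y \<subseteq> X"
  proof
    fix w assume "w \<in> (p^^(n-1)) ` Y"
    then obtain y where y: "y \<in> Y" "w = (p^^(n-1)) y" by auto
    have "sameit p L y (p x)" using y x p_in kp_eq_sameit unfolding Y_def by auto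
    then have "sameit p L ((p^^(n-1)) y) ((p^^(n-1)) (p x))" by (rule sameit_pow)
    moreover have "(p^^(n-1)) (p x) = x"
    proof -
      have "(p^^(Suc (n-1))) x = (p^^(n-1)) (p x)" by (simp only: funpow_Suc_right comp_apply)
      moreover have "Suc (n-1) = n" using n1 by simp
      ultimately show ?thesis using period[OF x] by simp
    qed
    ultimately have "sameit p L w x" using y by simp
    moreover have "w \<in> {1..n}" using y pow_in unfolding Y_def by auto
    ultimately show "w \<in> X" unfolding X_def using kp_eq_sameit x by auto
  qed
  have c2: "card Y \<le> card X" using card_inj_on_le[OF inj_on_subset[OF inj_pow subset_UNIV] bk finX] .
  have bp: "bij_betw p X Y"
  proof -
    have "card (p ` X) = card Y" using c1 c2 card_image[OF injp] by simp
    then have "p ` X = Y" using card_subset_eq[OF finY pXY] by simp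
    then show ?thesis unfolding bij_betw_def using injp by simp
  qed
  have bq: "bij_betw q X Y"
  proof -
    have "card (q ` X) = card Y" using c1 c2 card_image[OF injq] by simp
    then have "q ` X = Y" using card_subset_eq[OF finY qXY] by simp
    then show ?thesis unfolding bij_betw_def using injq by simp
  qed
  have LX: "L y = L x" if "y \<in> X" for y
  proof -
    have y: "y \<in> {1..n}" "kp y = kp x" using that unfolding X_def by auto
    show ?thesis using kp_top[OF y(1)] kp_top[OF x] y(2) by simp
  qed
  have MX: "M y = L x" if "y \<in> X" for y
  proof -
    have y: "y \<in> {1..n}" using that unfolding X_def by auto
    show ?thesis using LX[OF that] M_eq[OF y] by simp
  qed
  have mp: "(if \<not> L x then p y < p z else p z < p y)" if "y \<in> X" "z \<in> X" "y < z" for y z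
  proof -
    have yz: "y \<in> {1..n}" "z \<in> {1..n}" using that unfolding X_def by auto
    have g: "(L y \<longrightarrow> L z) \<and> (\<not> L y \<and> \<not> L z \<longrightarrow> p y < p z) \<and> (L y \<and> L z \<longrightarrow> p z < p y)"
      using gd yz that(3) unfolding good_def by blast
    show ?thesis using g LX[OF that(1)] LX[OF that(2)] by (cases "L x") auto
  qed
  have mq: "(if \<not> L x then q y < q z else q z < q y)" if "y \<in> X" "z \<in> X" "y < z" for y z
  proof -
    have yz: "y \<in> {1..n}" "z \<in> {1..n}" using that unfolding X_def by auto
    have g: "(M y \<longrightarrow> M z) \<and> (\<not> M y \<and> \<not> M z \<longrightarrow> q y < q z) \<and> (M y \<and> M z \<longrightarrow> q z < q y)"
      using qgood yz that(3) unfolding good_def by blast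
    show ?thesis using g MX[OF that(1)] MX[OF that(2)] by (cases "L x") auto
  qed
  show ?thesis by (rule mono_bij_unique[OF finY bq bp mq mp xX])
qed

end


lemma pw_neg: "pw f (\<lambda>x. \<not> L x) x k = (pw f L x k \<noteq> odd k)"
  by (induction k) auto

context cyc
begin

lemma kF_eq: "x \<in> {1..n} \<Longrightarrow> y \<in> {1..n} \<Longrightarrow> kk p F x n = kk p F y n \<longleftrightarrow> sameit p F x y"
proof
  assume xy: "x \<in> {1..n}" "y \<in> {1..n}" and "kk p F x n = kk p F y n"
  then have j: "\<forall>j<n. F ((p^^j) x) = F ((p^^j) y)" using kk_eq_iff by blast
  show "sameit p F x y" unfolding sameit_def
  proof
    fix j
    have "F ((p^^(j mod n)) x) = F ((p^^(j mod n)) y)" using j n1 by simp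
    then show "F ((p^^j) x) = F ((p^^j) y)" using pow_mod xy by simp
  qed
next
  assume "sameit p F x y"
  then show "kk p F x n = kk p F y n" unfolding sameit_def using kk_eq_iff by blast
qed

lemma pw_period: "x \<in> {1..n} \<Longrightarrow> pw p F ((p^^s) x) n = pw p F x n"
proof -
  assume x: "x \<in> {1..n}"
  have "pw p F x (s + n) = (pw p F x s \<noteq> pw p F ((p^^s) x) n)" by (rule pw_add)
  moreover have "pw p F x (n + s) = (pw p F x n \<noteq> pw p F ((p^^n) x) s)" by (rule pw_add)
  moreover have "(p^^n) x = x" by (rule period[OF x])
  ultimately have "(pw p F x n \<noteq> pw p F x s) = (pw p F x s \<noteq> pw p F ((p^^s) x) n)"
    by (simp add: add.commute)
  then show ?thesis by (cases "pw p F x s") auto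
qed

definition tm :: "nat \<Rightarrow> nat" where "tm a = (LEAST k. (p^^k) 1 = a)"

lemma tm: "a \<in> {1..n} \<Longrightarrow> tm a < n \<and> (p^^(tm a)) 1 = a"
proof -
  assume a: "a \<in> {1..n}"
  obtain s where s: "s < n" "(p^^s) 1 = a" using ex_time[OF a] by blast
  have "(p^^(tm a)) 1 = a" unfolding tm_def by (rule LeastI[of _ s]) (rule s(2))
  moreover have "tm a \<le> s" unfolding tm_def by (rule Least_le) (rule s(2))
  ultimately show ?thesis using s by simp
qed

lemma tm_unique: "k < n \<Longrightarrow> tm ((p^^k) 1) = k"
proof -
  assume k: "k < n"
  have a: "(p^^k) 1 \<in> {1..n}" by (rule pow_in[OF one_in])
  have inj: "inj_on (\<lambda>j. (p^^j) 1) {..<n}" using bij_time[OF one_in] unfolding bij_betw_def by simp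
  have "(p^^(tm ((p^^k) 1))) 1 = (p^^k) 1" using tm[OF a] by simp
  moreover have "tm ((p^^k) 1) \<in> {..<n}" using tm[OF a] by simp
  moreover have "k \<in> {..<n}" using k by simp
  ultimately show ?thesis using inj unfolding inj_on_def by blast
qed

end

locale cycE = cycg +
  assumes nm: "n mod 4 \<noteq> 2"
begin

definition L' :: "nat \<Rightarrow> bool" where "L' x = (\<not> L x)"
definition kn :: "nat \<Rightarrow> nat" where "kn a = kk p L' a n"
definition tb :: "nat \<Rightarrow> bool" where "tb a = pw p L' 1 (tm a)"
definition K2 :: "nat \<Rightarrow> nat" where "K2 a = 2 * kn a + (if tb a then 1 else 0)"

lemma sameit_L': "sameit p L' x y \<longleftrightarrow> sameit p L x y"
  unfolding sameit_def L'_def by simp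

lemma kn_eq: "x \<in> {1..n} \<Longrightarrow> y \<in> {1..n} \<Longrightarrow> kn x = kn y \<longleftrightarrow> sameit p L x y"
  unfolding kn_def using kF_eq[of x y L'] sameit_L' by simp

lemma tie_time:
  assumes a: "a \<in> {1..n}" and b: "b \<in> {1..n}" and ne: "a \<noteq> b" and e: "kn a = kn b"
    and lt: "tm a < tm b"
  shows "tb a \<noteq> tb b"
proof -
  define d where "d = tm b - tm a"
  have ta: "tm a < n" "(p^^(tm a)) 1 = a" using tm[OF a] by auto
  have tb': "tm b < n" "(p^^(tm b)) 1 = b" using tm[OF b] by auto
  have bd: "(p^^d) a = b"
  proof -
    have "(p^^d) ((p^^(tm a)) 1) = (p^^(d + tm a)) 1" by (rule funpow_comm)
    moreover have "d + tm a = tm b" using lt unfolding d_def by simp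
    ultimately show ?thesis using ta tb' by simp
  qed
  have d: "0 < d" "d < n" using lt tb' unfolding d_def by auto
  have s: "sameit p L a ((p^^d) a)" using bd e kn_eq[OF a b] by simp
  have "2 * d = n \<and> pw p L a d" by (rule tie[OF a d]) (use bd ne s in auto)
  then have dd: "2 * d = n" and pwd: "pw p L a d" by auto
  have "even d" using dd nm by presburger
  then have pwd': "pw p L' a d"
    using pw_neg[of p L a d] pwd unfolding L'_def[abs_def] by simp
  have "tb b = pw p L' 1 (tm a + d)" unfolding tb_def using lt d_def by simp
  also have "\<dots> = (pw p L' 1 (tm a) \<noteq> pw p L' ((p^^(tm a)) 1) d)" by (rule pw_add)
  also have "\<dots> = (tb a \<noteq> pw p L' a d)" using ta unfolding tb_def by simp
  finally show ?thesis using pwd' by simp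
qed

lemma tie_tb:
  assumes a: "a \<in> {1..n}" and b: "b \<in> {1..n}" and ne: "a \<noteq> b" and e: "kn a = kn b"
  shows "tb a \<noteq> tb b"
proof -
  have "tm a \<noteq> tm b" using tm[OF a] tm[OF b] ne by metis
  then consider "tm a < tm b" | "tm b < tm a" by linarith
  then show ?thesis
  proof cases
    case 1 then show ?thesis using tie_time[OF a b ne e] by simp
  next
    case 2 then show ?thesis using tie_time[OF b a _ _] ne e by auto
  qed
qed

lemma K2_inj: "inj_on K2 {1..n}"
proof (rule inj_onI)
  fix a b assume a: "a \<in> {1..n}" and b: "b \<in> {1..n}" and e: "K2 a = K2 b"
  have "kn a = kn b \<and> tb a = tb b" using e unfolding K2_def by (auto split: if_splits; presburger)
  then show "a = b" using tie_tb[OF a b] by blast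
qed

lemma tie_half:
  assumes a: "a \<in> {1..n}" and b: "b \<in> {1..n}" and ne: "a \<noteq> b" and e: "kn a = kn b"
  shows "\<exists>t. 2 * t = n \<and> sameit p L a ((p^^t) a)"
proof -
  obtain t where t: "t < n" "(p^^t) a = b" using connect[OF a b] by blast
  have t0: "0 < t" using t ne by (cases t) auto
  have s: "sameit p L a ((p^^t) a)" using t e kn_eq[OF a b] by simp
  have "2 * t = n \<and> pw p L a t" by (rule tie[OF a t0 t(1)]) (use t ne s in auto)
  then show ?thesis using s by blast
qed

lemma pw_full: "a \<in> {1..n} \<Longrightarrow> b \<in> {1..n} \<Longrightarrow> a \<noteq> b \<Longrightarrow> kn a = kn b \<Longrightarrow> \<not> pw p L' a n"
proof -
  assume a: "a \<in> {1..n}" and b: "b \<in> {1..n}" and ne: "a \<noteq> b" and e: "kn a = kn b"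
  obtain t where t: "2 * t = n" "sameit p L a ((p^^t) a)" using tie_half[OF a b ne e] by blast
  have "pw p L' a (t + t) = (pw p L' a t \<noteq> pw p L' ((p^^t) a) t)" by (rule pw_add)
  moreover have "pw p L' ((p^^t) a) t = pw p L' a t"
    using t(2) unfolding sameit_def L'_def by (intro pw_cong) auto
  moreover have "t + t = n" using t by simp
  ultimately show ?thesis by simp
qed

lemma tb_step:
  assumes a: "a \<in> {1..n}" and b: "b \<in> {1..n}" and ne: "a \<noteq> b" and e: "kn a = kn b"
  shows "tb (p a) = (tb a \<noteq> L' a)"
proof -
  have ta: "tm a < n" "(p^^(tm a)) 1 = a" using tm[OF a] by auto
  have pa: "p a = (p^^(Suc (tm a))) 1" using ta by simp
  have rec: "pw p L' 1 (Suc (tm a)) = (tb a \<noteq> L' a)" unfolding tb_def using ta by simp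
  show ?thesis
  proof (cases "Suc (tm a) < n")
    case True
    have "tm (p a) = Suc (tm a)" using pa tm_unique[OF True] by simp
    then show ?thesis using rec unfolding tb_def by simp
  next
    case False
    then have sn: "Suc (tm a) = n" using ta by simp
    have p1: "p a = 1" using pa sn period[OF one_in] by simp
    have "tm 1 = 0" using tm_unique[of 0] n1 by simp
    then have tb1: "\<not> tb (p a)" using p1 unfolding tb_def by simp
    have "pw p L' 1 n = pw p L' ((p^^(tm a)) 1) n" using pw_period[OF one_in] by simp
    also have "\<dots> = pw p L' a n" using ta by simp
    finally have "\<not> pw p L' 1 n" using pw_full[OF a b ne e] by simp
    then show ?thesis using rec sn tb1 by simp
  qed
qed

lemma kn_top: "x \<in> {1..n} \<Longrightarrow> L' x \<longleftrightarrow> 2^(n-1) \<le> kn x"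
proof -
  have nn: "n = Suc (n-1)" using n1 by simp
  show ?thesis
    using kk_top1[of L' x "n-1" p] kk_top0[of L' x p "n-1"] nn unfolding kn_def by (metis not_le)
qed

lemma kn_lt: "kn x < 2^n" unfolding kn_def by (rule kk_lt)

lemma kn_shift: "x \<in> {1..n} \<Longrightarrow> y \<in> {1..n} \<Longrightarrow> kn x = kn y \<Longrightarrow> kn (p x) = kn (p y)"
proof -
  assume x: "x \<in> {1..n}" and y: "y \<in> {1..n}" and e: "kn x = kn y"
  have "sameit p L x y" using kn_eq[OF x y] e by simp
  then have "sameit p L ((p^^1) x) ((p^^1) y)" by (rule sameit_pow)
  then show ?thesis using kn_eq[OF p_in[OF x] p_in[OF y]] by simp
qed

lemma step_mono:
  assumes a1: "a1 \<in> {1..n}" and a2: "a2 \<in> {1..n}" and lt: "K2 a1 < K2 a2" and l: "L' a1 = L' a2"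
  shows "if L' a1 then K2 (p a2) < K2 (p a1) else K2 (p a1) < K2 (p a2)"
proof -
  have "kn a1 \<le> kn a2" using lt unfolding K2_def by (auto split: if_splits)
  then consider "kn a1 < kn a2" | "kn a1 = kn a2" by linarith
  then show ?thesis
  proof cases
    case 1
    have "kk p L' a1 (Suc n) < kk p L' a2 (Suc n)" using kk_less_Suc 1 unfolding kn_def by blast
    then have "if L' a1 then kn (p a2) < kn (p a1) else kn (p a1) < kn (p a2)"
      using l kn_lt[of "p a1"] kn_lt[of "p a2"] unfolding kn_def by (auto split: if_splits)
    then show ?thesis unfolding K2_def by (auto split: if_splits)
  next
    case 2
    have tt: "\<not> tb a1" "tb a2" using lt 2 unfolding K2_def by (auto split: if_splits)
    have ne: "a1 \<noteq> a2" using tt by auto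
    have "kn (p a1) = kn (p a2)" by (rule kn_shift[OF a1 a2 2])
    moreover have "tb (p a1) = (tb a1 \<noteq> L' a1)" by (rule tb_step[OF a1 a2 ne 2])
    moreover have "tb (p a2) = (tb a2 \<noteq> L' a2)" by (rule tb_step[OF a2 a1 _ 2[symmetric]]) (use ne in auto)
    ultimately show ?thesis using tt l unfolding K2_def by auto
  qed
qed

definition rk :: "nat \<Rightarrow> nat" where "rk a = Suc (card {b \<in> {1..n}. K2 b < K2 a})"

lemma rk_less: "a \<in> {1..n} \<Longrightarrow> b \<in> {1..n} \<Longrightarrow> K2 a < K2 b \<Longrightarrow> rk a < rk b"
proof -
  assume a: "a \<in> {1..n}" and b: "b \<in> {1..n}" and lt: "K2 a < K2 b"
  have "{c \<in> {1..n}. K2 c < K2 a} \<subset> {c \<in> {1..n}. K2 c < K2 b}"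
    using a lt by auto
  then have "card {c \<in> {1..n}. K2 c < K2 a} < card {c \<in> {1..n}. K2 c < K2 b}"
    by (rule psubset_card_mono[rotated]) simp
  then show ?thesis unfolding rk_def by simp
qed

lemma rk_less_iff: "a \<in> {1..n} \<Longrightarrow> b \<in> {1..n} \<Longrightarrow> rk a < rk b \<longleftrightarrow> K2 a < K2 b"
proof -
  assume a: "a \<in> {1..n}" and b: "b \<in> {1..n}"
  show ?thesis
  proof
    assume r: "rk a < rk b"
    show "K2 a < K2 b"
    proof (rule ccontr)
      assume "\<not> K2 a < K2 b"
      then have "K2 b < K2 a \<or> K2 a = K2 b" by linarith
      then show False
      proof
        assume "K2 b < K2 a" then show False using rk_less[OF b a] r by simp
      next
        assume "K2 a = K2 b" then have "a = b" using K2_inj a b unfolding inj_on_def by blast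
        then show False using r by simp
      qed
    qed
  qed (rule rk_less[OF a b])
qed

lemma rk_in: "a \<in> {1..n} \<Longrightarrow> rk a \<in> {1..n}"
proof -
  assume a: "a \<in> {1..n}"
  have "{c \<in> {1..n}. K2 c < K2 a} \<subseteq> {1..n} - {a}" by auto
  then have "card {c \<in> {1..n}. K2 c < K2 a} \<le> card ({1..n} - {a})" by (intro card_mono) auto
  also have "\<dots> = n - 1" using a by simp
  finally show ?thesis unfolding rk_def using n1 by simp
qed

lemma rk_inj: "inj_on rk {1..n}"
proof (rule inj_onI)
  fix a b assume a: "a \<in> {1..n}" and b: "b \<in> {1..n}" and e: "rk a = rk b"
  have "\<not> K2 a < K2 b" "\<not> K2 b < K2 a" using rk_less[OF a b] rk_less[OF b a] e by auto
  then have "K2 a = K2 b" by simp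
  then show "a = b" using K2_inj a b unfolding inj_on_def by blast
qed

lemma rk_bij: "bij_betw rk {1..n} {1..n}"
proof -
  have sub: "rk ` {1..n} \<subseteq> {1..n}" using rk_in by auto
  have "card (rk ` {1..n}) = card {1..n}" using card_image[OF rk_inj] by simp
  then have "rk ` {1..n} = {1..n}" using card_subset_eq[OF finite_atLeastAtMost sub] by simp
  then show ?thesis unfolding bij_betw_def using rk_inj by simp
qed

definition ri :: "nat \<Rightarrow> nat" where "ri = the_inv_into {1..n} rk"

lemma ri_rk: "a \<in> {1..n} \<Longrightarrow> ri (rk a) = a"
  unfolding ri_def by (rule the_inv_into_f_f[OF rk_inj])

lemma rk_ri: "y \<in> {1..n} \<Longrightarrow> rk (ri y) = y"
  unfolding ri_def using rk_bij unfolding bij_betw_def by (intro f_the_inv_into_f[OF rk_inj]) simp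

lemma ri_in: "y \<in> {1..n} \<Longrightarrow> ri y \<in> {1..n}"
  unfolding ri_def using rk_bij unfolding bij_betw_def by (intro the_inv_into_into[OF rk_inj]) auto

definition qq :: "nat \<Rightarrow> nat" where "qq y = (if y \<in> {1..n} then rk (p (ri y)) else y)"
definition MM :: "nat \<Rightarrow> bool" where "MM y = L' (ri y)"

lemma qq_rk: "a \<in> {1..n} \<Longrightarrow> qq (rk a) = rk (p a)"
  unfolding qq_def using rk_in ri_rk by simp

lemma MM_rk: "a \<in> {1..n} \<Longrightarrow> MM (rk a) = L' a"
  unfolding MM_def using ri_rk by simp

lemma qq_perm: "qq permutes {1..n}"
proof -
  have stable: "qq x = x" if "x \<notin> {1..n}" for x unfolding qq_def by (rule if_not_P[OF that])
  have inj: "inj_on qq {1..n}"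
  proof (rule inj_onI)
    fix x y assume x: "x \<in> {1..n}" and y: "y \<in> {1..n}" and e: "qq x = qq y"
    have "rk (p (ri x)) = rk (p (ri y))" using e x y unfolding qq_def by simp
    then have "p (ri x) = p (ri y)" using rk_inj p_in ri_in x y unfolding inj_on_def by blast
    then have "ri x = ri y" using permutes_inj[OF perm] unfolding inj_def by blast
    then show "x = y" using rk_ri x y by metis
  qed
  have sub: "qq ` {1..n} \<subseteq> {1..n}" unfolding qq_def using rk_in p_in ri_in by auto
  have "card (qq ` {1..n}) = card {1..n}" using card_image[OF inj] by simp
  then have "qq ` {1..n} = {1..n}" using card_subset_eq[OF finite_atLeastAtMost sub] by simp
  then have "bij_betw qq {1..n} {1..n}" unfolding bij_betw_def using inj by simp
  then show ?thesis by (rule bij_imp_permutes) (rule stable)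
qed

lemma rk_surj: "y \<in> {1..n} \<Longrightarrow> \<exists>a\<in>{1..n}. y = rk a"
  using rk_ri ri_in by metis

lemma qq_good: "good n qq MM"
  unfolding good_def
proof (intro ballI impI)
  fix y1 y2 assume y1: "y1 \<in> {1..n}" and y2: "y2 \<in> {1..n}" and lt: "y1 < y2"
  obtain a1 where a1: "a1 \<in> {1..n}" "y1 = rk a1" using rk_surj[OF y1] by blast
  obtain a2 where a2: "a2 \<in> {1..n}" "y2 = rk a2" using rk_surj[OF y2] by blast
  have K: "K2 a1 < K2 a2" using rk_less_iff[OF a1(1) a2(1)] lt a1 a2 by simp
  have m1: "MM y1 = L' a1" and m2: "MM y2 = L' a2" using MM_rk a1 a2 by auto
  have q1: "qq y1 = rk (p a1)" and q2: "qq y2 = rk (p a2)" using qq_rk a1 a2 by auto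
  have c1: "MM y1 \<longrightarrow> MM y2"
  proof
    assume "MM y1"
    then have "L' a1" using m1 by simp
    then have "2^(n-1) \<le> kn a1" using kn_top[OF a1(1)] by simp
    moreover have "kn a1 \<le> kn a2" using K unfolding K2_def by (auto split: if_splits)
    ultimately have "L' a2" using kn_top[OF a2(1)] by simp
    then show "MM y2" using m2 by simp
  qed
  have c2: "\<not> MM y1 \<and> \<not> MM y2 \<longrightarrow> qq y1 < qq y2"
  proof
    assume "\<not> MM y1 \<and> \<not> MM y2"
    then have "\<not> L' a1" "\<not> L' a2" using m1 m2 by auto
    then have "K2 (p a1) < K2 (p a2)" using step_mono[OF a1(1) a2(1) K] by simp
    then show "qq y1 < qq y2" using q1 q2 rk_less p_in a1 a2 by simp
  qed
  have c3: "MM y1 \<and> MM y2 \<longrightarrow> qq y2 < qq y1"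
  proof
    assume "MM y1 \<and> MM y2"
    then have "L' a1" "L' a2" using m1 m2 by auto
    then have "K2 (p a2) < K2 (p a1)" using step_mono[OF a1(1) a2(1) K] by simp
    then show "qq y2 < qq y1" using q1 q2 rk_less p_in a1 a2 by simp
  qed
  show "(MM y1 \<longrightarrow> MM y2) \<and> (\<not> MM y1 \<and> \<not> MM y2 \<longrightarrow> qq y1 < qq y2) \<and> (MM y1 \<and> MM y2 \<longrightarrow> qq y2 < qq y1)"
    using c1 c2 c3 by blast
qed

lemma qq_pow: "a \<in> {1..n} \<Longrightarrow> (qq^^k) (rk a) = rk ((p^^k) a)"
proof (induction k)
  case 0 then show ?case by simp
next
  case (Suc k)
  then show ?case using qq_rk pow_in by simp
qed

lemma qq_cyc: "cyclic_perm n qq"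
  unfolding cyclic_perm_def
proof (intro conjI ballI)
  show "qq permutes {1..n}" by (rule qq_perm)
  fix x assume x: "x \<in> {1..n}"
  obtain a0 where a0: "a0 \<in> {1..n}" "1 = rk a0" using rk_surj[OF one_in] by blast
  obtain a where a: "a \<in> {1..n}" "x = rk a" using rk_surj[OF x] by blast
  obtain t where t: "(p^^t) a0 = a" using connect[OF a0(1) a(1)] by blast
  have "(qq^^t) 1 = x" using qq_pow[OF a0(1), of t] a0(2) a(2) t by simp
  then show "\<exists>k. (qq^^k) 1 = x" by blast
qed

lemma construction:
  "\<exists>q r M. q permutes {1..n} \<and> cyclic_perm n q \<and> bij_betw r {1..n} {1..n} \<and>
     (\<forall>a\<in>{1..n}. q (r a) = r (p a)) \<and> (\<forall>a\<in>{1..n}. M (r a) = (\<not> L a)) \<and> good n q M"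
  using qq_perm qq_cyc rk_bij qq_rk MM_rk qq_good unfolding L'_def by blast

end


definition pk :: "nat \<Rightarrow> (nat \<Rightarrow> nat) \<Rightarrow> nat" where
  "pk n f = (THE x. x \<in> {1..n} \<and> f x = n)"

definition Lpc :: "nat \<Rightarrow> (nat \<Rightarrow> nat) \<Rightarrow> bool \<Rightarrow> nat \<Rightarrow> bool" where
  "Lpc n f c x = (pk n f < x \<or> (x = pk n f \<and> c))"

lemma pk:
  assumes f: "f permutes {1..n}" and n1: "1 \<le> n"
  shows "pk n f \<in> {1..n} \<and> f (pk n f) = n"
    and "x \<in> {1..n} \<Longrightarrow> f x = n \<Longrightarrow> x = pk n f"
proof -
  have nin: "n \<in> {1..n}" using n1 by simp
  have "n \<in> f ` {1..n}" using permutes_image[OF f] nin by simp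
  then obtain x0 where x0: "x0 \<in> {1..n}" "f x0 = n" by blast
  have uniq: "x = x0" if "x \<in> {1..n}" "f x = n" for x
  proof -
    have "f x = f x0" using that(2) x0(2) by simp
    then show ?thesis using permutes_inj[OF f] by (simp add: inj_eq)
  qed
  have "pk n f = x0" unfolding pk_def
  proof (rule the_equality)
    show "x0 \<in> {1..n} \<and> f x0 = n" using x0 by simp
    show "x = x0" if "x \<in> {1..n} \<and> f x = n" for x using uniq that by blast
  qed
  then show "pk n f \<in> {1..n} \<and> f (pk n f) = n" using x0 by simp
  show "x \<in> {1..n} \<Longrightarrow> f x = n \<Longrightarrow> x = pk n f" using uniq \<open>pk n f = x0\<close> by simp
qed

lemma perm_le: "f permutes {1..n} \<Longrightarrow> x \<in> {1..n} \<Longrightarrow> f x \<in> {1..n}"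
  by (simp only: permutes_in_image)

lemma good_Lpc:
  assumes C: "f \<in> C_pm n" and n1: "1 \<le> n"
  shows "good n f (Lpc n f c)"
proof -
  have f: "f permutes {1..n}" using C unfolding C_pm_def cyclic_perm_def by auto
  obtain e where e: "e \<le> n" and inc: "\<And>i j. 1 \<le> i \<Longrightarrow> i < j \<Longrightarrow> j \<le> e \<Longrightarrow> f i < f j"
    and dec: "\<And>i j. e + 1 \<le> i \<Longrightarrow> i < j \<Longrightarrow> j \<le> n \<Longrightarrow> f i > f j"
    using C unfolding C_pm_def unimodal_perm_def by blast
  define p where "p = pk n f"
  have p: "p \<in> {1..n}" "f p = n" using pk(1)[OF f n1] unfolding p_def by auto
  have ne: "f x \<noteq> n" if "x \<in> {1..n}" "x \<noteq> p" for x using pk(2)[OF f n1] that unfolding p_def by blast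
  have le: "f x \<le> n" if "x \<in> {1..n}" for x using perm_le[OF f that] by simp
  have inc2: "f i < f j" if "1 \<le> i" "i < j" "j \<le> p" for i j
  proof (cases "j \<le> e")
    case True then show ?thesis using inc that by simp
  next
    case False
    have "j = p"
    proof (rule ccontr)
      assume "j \<noteq> p"
      then have "e + 1 \<le> j" "j < p" "p \<le> n" using False that p by auto
      then have "f j > f p" using dec by blast
      then show False using p le[of j] that \<open>p \<le> n\<close> by simp
    qed
    then show ?thesis using ne[of i] le[of i] p that by fastforce
  qed
  have dec2: "f j < f i" if "p \<le> i" "i < j" "j \<le> n" for i j
  proof (cases "e + 1 \<le> i")
    case True then show ?thesis using dec that by simp
  next
    case False
    have "i = p"
    proof (rule ccontr)
      assume "i \<noteq> p"
      then have "1 \<le> p" "p < i" "i \<le> e" using False that p by auto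
      then have "f p < f i" using inc by blast
      then show False using p le[of i] that by simp
    qed
    then show ?thesis using ne[of j] le[of j] p that by fastforce
  qed
  show ?thesis unfolding good_def Lpc_def p_def[symmetric]
  proof (intro ballI impI conjI)
    fix x y assume x: "x \<in> {1..n}" and y: "y \<in> {1..n}" and xy: "x < y"
    show "p < x \<or> x = p \<and> c \<Longrightarrow> p < y \<or> y = p \<and> c" using xy by auto
    show "\<not> (p < x \<or> x = p \<and> c) \<and> \<not> (p < y \<or> y = p \<and> c) \<Longrightarrow> f x < f y"
      using inc2[of x y] x xy by auto
    show "(p < x \<or> x = p \<and> c) \<and> (p < y \<or> y = p \<and> c) \<Longrightarrow> f y < f x"
      using dec2[of x y] y xy by auto
  qed
qed

lemma good_to_C:
  assumes f: "f permutes {1..n}" and cy: "cyclic_perm n f" and n1: "1 \<le> n" and g: "good n f M"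
  shows "f \<in> C_pm n" and "\<And>x. x \<in> {1..n} \<Longrightarrow> M x = Lpc n f (M (pk n f)) x"
proof -
  define p where "p = pk n f"
  have p: "p \<in> {1..n}" "f p = n" using pk(1)[OF f n1] unfolding p_def by auto
  have le: "f x \<le> n" if "x \<in> {1..n}" for x using perm_le[OF f that] by simp
  have G: "(M x \<longrightarrow> M y) \<and> (\<not> M x \<and> \<not> M y \<longrightarrow> f x < f y) \<and> (M x \<and> M y \<longrightarrow> f y < f x)"
    if "x \<in> {1..n}" "y \<in> {1..n}" "x < y" for x y using g that unfolding good_def by blast
  have below: "\<not> M x" if "x \<in> {1..n}" "x < p" for x
  proof
    assume "M x"
    then have "M p" "f p < f x" using G[OF that(1) p(1) that(2)] by auto
    then show False using p le[OF that(1)] by simp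
  qed
  have above: "M x" if "x \<in> {1..n}" "p < x" for x
  proof (rule ccontr)
    assume "\<not> M x"
    then have "\<not> M p" "f p < f x" using G[OF p(1) that(1) that(2)] by auto
    then show False using p le[OF that(1)] by simp
  qed
  show Lx: "M x = Lpc n f (M (pk n f)) x" if "x \<in> {1..n}" for x
    unfolding Lpc_def p_def[symmetric] using below[OF that] above[OF that] by (cases "x < p"; cases "p < x") auto
  define e where "e = (if M p then p - 1 else p)"
  have nb: "\<not> M x" if "x \<in> {1..n}" "x \<le> e" for x
  proof (cases "x < p")
    case True then show ?thesis using below that by blast
  next
    case False
    then have "x = p" "\<not> M p" using that p unfolding e_def by (auto split: if_splits)
    then show ?thesis by simp
  qed
  have ab: "M x" if "x \<in> {1..n}" "e + 1 \<le> x" for x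
  proof (cases "p < x")
    case True then show ?thesis using above that by blast
  next
    case False
    then have "x = p" "M p" using that p unfolding e_def by (auto split: if_splits)
    then show ?thesis by simp
  qed
  have "unimodal_perm n f" unfolding unimodal_perm_def
  proof (intro exI[of _ e] conjI allI impI)
    show "e \<le> n" using p unfolding e_def by auto
    fix i j
    assume ij: "1 \<le> i \<and> i < j \<and> j \<le> e"
    then have ij2: "i \<in> {1..n}" "j \<in> {1..n}" using p unfolding e_def by (auto split: if_splits)
    have "\<not> M i" "\<not> M j" using nb[OF ij2(1)] nb[OF ij2(2)] ij by auto
    then show "f i < f j" using G[OF ij2] ij by blast
  next
    fix i j
    assume ij: "e + 1 \<le> i \<and> i < j \<and> j \<le> n"
    then have ij2: "i \<in> {1..n}" "j \<in> {1..n}" by auto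
    have "M i" "M j" using ab[OF ij2(1)] ab[OF ij2(2)] ij by auto
    then show "f j < f i" using G[OF ij2] ij by blast
  qed
  then show "f \<in> C_pm n" using cy unfolding C_pm_def by simp
qed

definition Zc :: "nat \<Rightarrow> (nat \<Rightarrow> nat) \<Rightarrow> bool \<Rightarrow> nat" where
  "Zc n f c = card {x \<in> {1..n}. \<not> Lpc n f c x}"

definition AA :: "nat \<Rightarrow> nat \<Rightarrow> ((nat \<Rightarrow> nat) \<times> bool) set" where
  "AA n j = {(f, c). f \<in> C_pm n \<and> Zc n f c = j}"

lemma C_perm: "f \<in> C_pm n \<Longrightarrow> f permutes {1..n}"
  unfolding C_pm_def cyclic_perm_def by auto

lemma C_fin: "finite (C_pm n)"
proof -
  have "C_pm n \<subseteq> {f. f permutes {1..n}}" using C_perm by auto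
  then show ?thesis using finite_permutations[of "{1..n}"] finite_subset by auto
qed

lemma Zc_val:
  assumes f: "f \<in> C_pm n" and n1: "1 \<le> n"
  shows "Zc n f c = (if c then pk n f - 1 else pk n f)"
proof -
  have p: "pk n f \<in> {1..n}" using pk(1)[OF C_perm[OF f] n1] by simp
  have "{x \<in> {1..n}. \<not> Lpc n f c x} = (if c then {1..<pk n f} else {1..pk n f})"
    unfolding Lpc_def using p by auto
  then show ?thesis unfolding Zc_def by simp
qed

lemma Lambda_pk: "1 \<le> n \<Longrightarrow> Lambda n i = card {f \<in> C_pm n. pk n f = i}"
proof -
  assume n1: "1 \<le> n"
  have "{f \<in> C_pm n. f i = n} = {f \<in> C_pm n. pk n f = i}"
  proof (intro Collect_cong conj_cong refl)
    fix f assume f: "f \<in> C_pm n"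
    note P = C_perm[OF f]
    show "f i = n \<longleftrightarrow> pk n f = i"
    proof
      assume fi: "f i = n"
      have "i \<in> {1..n}"
      proof (rule ccontr)
        assume "i \<notin> {1..n}"
        then have "f i = i" by (rule permutes_not_in[OF P])
        then show False using fi \<open>i \<notin> {1..n}\<close> n1 by simp
      qed
      then show "pk n f = i" using pk(2)[OF P n1] fi by simp
    next
      assume "pk n f = i"
      then show "f i = n" using pk(1)[OF P n1] by simp
    qed
  qed
  then show ?thesis unfolding Lambda_def by simp
qed

lemma card_AA:
  assumes n1: "1 \<le> n"
  shows "card (AA n j) = Lambda n j + Lambda n (Suc j)"
proof -
  have "AA n j = ({f \<in> C_pm n. pk n f = j} \<times> {False}) \<union> ({f \<in> C_pm n. pk n f = Suc j} \<times> {True})"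
  proof (rule set_eqI)
    fix z :: "(nat \<Rightarrow> nat) \<times> bool"
    obtain f c where z: "z = (f, c)" by (cases z)
    show "z \<in> AA n j \<longleftrightarrow> z \<in> ({f \<in> C_pm n. pk n f = j} \<times> {False}) \<union> ({f \<in> C_pm n. pk n f = Suc j} \<times> {True})"
    proof (cases "f \<in> C_pm n")
      case True
      have "1 \<le> pk n f" using pk(1)[OF C_perm[OF True] n1] by simp
      then show ?thesis unfolding z AA_def using Zc_val[OF True n1, of c] True by (cases c) auto
    next
      case False
      then show ?thesis unfolding z AA_def by auto
    qed
  qed
  moreover have "card (({f \<in> C_pm n. pk n f = j} \<times> {False}) \<union> ({f \<in> C_pm n. pk n f = Suc j} \<times> {True}))
      = card {f \<in> C_pm n. pk n f = j} + card {f \<in> C_pm n. pk n f = Suc j}"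
    by (subst card_Un_disjoint) (auto simp: card_cartesian_product C_fin)
  ultimately show ?thesis using Lambda_pk[OF n1] by simp
qed

definition RR :: "nat \<Rightarrow> (nat \<Rightarrow> nat) \<times> bool \<Rightarrow> (nat \<Rightarrow> nat) \<times> bool \<Rightarrow> bool" where
  "RR n x y = (fst y \<in> C_pm n \<and> (\<exists>r. bij_betw r {1..n} {1..n} \<and>
      (\<forall>a\<in>{1..n}. fst y (r a) = r (fst x a)) \<and>
      (\<forall>a\<in>{1..n}. Lpc n (fst y) (snd y) (r a) = (\<not> Lpc n (fst x) (snd x) a))))"

lemma card_compl: "card {x \<in> {1..n::nat}. P x} = n - card {x \<in> {1..n}. \<not> P x}"
proof -
  let ?S = "{x \<in> {1..n}. \<not> P x}"
  have "{x \<in> {1..n}. P x} = {1..n} - ?S" by auto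
  moreover have "card ({1..n} - ?S) = card {1..n} - card ?S" by (rule card_Diff_subset) auto
  ultimately show ?thesis by simp
qed

lemma RR_ex:
  assumes f: "f \<in> C_pm n" and n1: "1 \<le> n" and nm: "n mod 4 \<noteq> 2"
  shows "\<exists>y. RR n (f, c) y \<and> y \<in> AA n (n - Zc n f c)"
proof -
  interpret cycE n f "Lpc n f c"
  proof
    show "cyclic_perm n f" using f unfolding C_pm_def by simp
    show "1 \<le> n" by (rule n1)
    show "good n f (Lpc n f c)" by (rule good_Lpc[OF f n1])
    show "n mod 4 \<noteq> 2" by (rule nm)
  qed
  obtain q r M where q: "q permutes {1..n}" "cyclic_perm n q" and r: "bij_betw r {1..n} {1..n}"
    and cj: "\<forall>a\<in>{1..n}. q (r a) = r (f a)" and cM: "\<forall>a\<in>{1..n}. M (r a) = (\<not> Lpc n f c a)"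
    and g: "good n q M"
    using construction by blast
  have qC: "q \<in> C_pm n" using good_to_C(1)[OF q n1 g] .
  define d where "d = M (pk n q)"
  have Md: "M x = Lpc n q d x" if "x \<in> {1..n}" for x using good_to_C(2)[OF q n1 g that] unfolding d_def .
  have rin: "r a \<in> {1..n}" if "a \<in> {1..n}" for a using r that unfolding bij_betw_def by auto
  have L2: "\<forall>a\<in>{1..n}. Lpc n q d (r a) = (\<not> Lpc n f c a)" using cM Md rin by simp
  have RRy: "RR n (f, c) (q, d)" unfolding RR_def using qC r cj L2 by auto
  have "{y \<in> {1..n}. \<not> Lpc n q d y} = r ` {a \<in> {1..n}. Lpc n f c a}"
  proof
    show "{y \<in> {1..n}. \<not> Lpc n q d y} \<subseteq> r ` {a \<in> {1..n}. Lpc n f c a}"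
    proof
      fix y assume y: "y \<in> {y \<in> {1..n}. \<not> Lpc n q d y}"
      then have "y \<in> r ` {1..n}" using r unfolding bij_betw_def by simp
      then obtain a where a: "a \<in> {1..n}" "y = r a" by blast
      then show "y \<in> r ` {a \<in> {1..n}. Lpc n f c a}" using y L2 by auto
    qed
    show "r ` {a \<in> {1..n}. Lpc n f c a} \<subseteq> {y \<in> {1..n}. \<not> Lpc n q d y}"
      using L2 rin by auto
  qed
  moreover have "inj_on r {a \<in> {1..n}. Lpc n f c a}"
    using r unfolding bij_betw_def by (auto intro: inj_on_subset)
  ultimately have "Zc n q d = card {a \<in> {1..n}. Lpc n f c a}"
    unfolding Zc_def using card_image[of r "{a \<in> {1..n}. Lpc n f c a}"] by simp
  also have "\<dots> = n - Zc n f c" unfolding Zc_def by (rule card_compl)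
  finally have "(q, d) \<in> AA n (n - Zc n f c)" unfolding AA_def using qC by simp
  then show ?thesis using RRy by blast
qed

lemma RR_inj:
  assumes f1: "f1 \<in> C_pm n" and f2: "f2 \<in> C_pm n" and n1: "1 \<le> n"
    and R1: "RR n (f1, c1) y" and R2: "RR n (f2, c2) y"
  shows "f1 = f2 \<and> c1 = c2"
proof -
  obtain g d where y: "y = (g, d)" by (cases y)
  obtain r1 where r1: "bij_betw r1 {1..n} {1..n}" "\<forall>a\<in>{1..n}. g (r1 a) = r1 (f1 a)"
      "\<forall>a\<in>{1..n}. Lpc n g d (r1 a) = (\<not> Lpc n f1 c1 a)"
    using R1 unfolding RR_def y by auto
  obtain r2 where r2: "bij_betw r2 {1..n} {1..n}" "\<forall>a\<in>{1..n}. g (r2 a) = r2 (f2 a)"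
      "\<forall>a\<in>{1..n}. Lpc n g d (r2 a) = (\<not> Lpc n f2 c2 a)"
    using R2 unfolding RR_def y by auto
  define i2 where "i2 = the_inv_into {1..n} r2"
  have inj2: "inj_on r2 {1..n}" using r2(1) unfolding bij_betw_def by simp
  have img2: "r2 ` {1..n} = {1..n}" using r2(1) unfolding bij_betw_def by simp
  have img1: "r1 ` {1..n} = {1..n}" using r1(1) unfolding bij_betw_def by simp
  have i2r: "i2 (r2 b) = b" if "b \<in> {1..n}" for b
    unfolding i2_def by (rule the_inv_into_f_f[OF inj2 that])
  have r2i: "r2 (i2 y) = y" if "y \<in> {1..n}" for y
    unfolding i2_def using img2 that by (intro f_the_inv_into_f[OF inj2]) simp
  have i2in: "i2 y \<in> {1..n}" if "y \<in> {1..n}" for y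
    unfolding i2_def using img2 that by (intro the_inv_into_into[OF inj2]) auto
  have r1in: "r1 a \<in> {1..n}" if "a \<in> {1..n}" for a using img1 that by auto
  define rho where "rho = (\<lambda>a. i2 (r1 a))"
  have rho_bij: "bij_betw rho {1..n} {1..n}"
  proof -
    have "bij_betw i2 {1..n} {1..n}" unfolding i2_def using r2(1) by (rule bij_betw_the_inv_into)
    then show ?thesis unfolding rho_def using bij_betw_trans[OF r1(1)] by (simp add: comp_def)
  qed
  have P1: "f1 permutes {1..n}" and P2: "f2 permutes {1..n}" using C_perm f1 f2 by auto
  interpret cycU n f1 "Lpc n f1 c1" f2 "Lpc n f2 c2" rho
  proof
    show "cyclic_perm n f1" using f1 unfolding C_pm_def by simp
    show "1 \<le> n" by (rule n1)
    show "good n f1 (Lpc n f1 c1)" by (rule good_Lpc[OF f1 n1])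
    show "f2 permutes {1..n}" by (rule P2)
    show "good n f2 (Lpc n f2 c2)" by (rule good_Lpc[OF f2 n1])
    show "bij_betw rho {1..n} {1..n}" by (rule rho_bij)
    fix a assume a: "a \<in> {1..n}"
    define b where "b = rho a"
    have b: "b \<in> {1..n}" "r2 b = r1 a" unfolding b_def rho_def using i2in r2i r1in a by auto
    have "r2 (f2 b) = g (r2 b)" using r2(2) b(1) by simp
    also have "\<dots> = r1 (f1 a)" using r1(2) b a by simp
    finally have "i2 (r2 (f2 b)) = i2 (r1 (f1 a))" by simp
    moreover have "i2 (r2 (f2 b)) = f2 b" by (rule i2r[OF perm_le[OF P2 b(1)]])
    ultimately have "f2 b = i2 (r1 (f1 a))" by simp
    then show "f2 (rho a) = rho (f1 a)" unfolding b_def rho_def by simp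
    have "Lpc n f2 c2 b = (\<not> Lpc n g d (r2 b))" using r2(3) b(1) by simp
    also have "\<dots> = Lpc n f1 c1 a" using r1(3) a b by simp
    finally show "Lpc n f2 c2 (rho a) = Lpc n f1 c1 a" unfolding b_def .
  qed
  have eqf: "f1 = f2"
  proof
    fix x show "f1 x = f2 x"
    proof (cases "x \<in> {1..n}")
      case True then show ?thesis using q_eq by simp
    next
      case False then show ?thesis using permutes_not_in[OF P1] permutes_not_in[OF P2] by simp
    qed
  qed
  have pin: "pk n f1 \<in> {1..n}" using pk(1)[OF P1 n1] by simp
  have "Lpc n f2 c2 (pk n f1) = Lpc n f1 c1 (pk n f1)" using M_eq[OF pin] .
  then have "c1 = c2" using eqf unfolding Lpc_def by simp
  then show ?thesis using eqf by simp
qed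

lemma AA_le:
  assumes n1: "1 \<le> n" and nm: "n mod 4 \<noteq> 2" and j: "j \<le> n"
  shows "card (AA n j) \<le> card (AA n (n - j))"
proof -
  define Phi where "Phi = (\<lambda>x. SOME y. RR n x y \<and> y \<in> AA n (n - j))"
  have Phi: "RR n x (Phi x) \<and> Phi x \<in> AA n (n - j)" if "x \<in> AA n j" for x
  proof -
    obtain f c where x0: "x = (f, c)" by (cases x)
    have x: "x = (f, c)" "f \<in> C_pm n" "Zc n f c = j" using that x0 unfolding AA_def by auto
    have "\<exists>y. RR n x y \<and> y \<in> AA n (n - j)" using RR_ex[OF x(2) n1 nm, of c] x by simp
    then show ?thesis unfolding Phi_def by (rule someI_ex)
  qed
  have "inj_on Phi (AA n j)"
  proof (rule inj_onI)
    fix x1 x2 assume x1: "x1 \<in> AA n j" and x2: "x2 \<in> AA n j" and e: "Phi x1 = Phi x2"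
    obtain f1 c1 where a10: "x1 = (f1, c1)" by (cases x1)
    obtain f2 c2 where a20: "x2 = (f2, c2)" by (cases x2)
    have a1: "x1 = (f1, c1)" "f1 \<in> C_pm n" using x1 a10 unfolding AA_def by auto
    have a2: "x2 = (f2, c2)" "f2 \<in> C_pm n" using x2 a20 unfolding AA_def by auto
    have "RR n (f1, c1) (Phi x1)" "RR n (f2, c2) (Phi x1)" using Phi[OF x1] Phi[OF x2] e a1 a2 by auto
    then show "x1 = x2" using RR_inj[OF a1(2) a2(2) n1] a1 a2 by simp
  qed
  moreover have "Phi ` AA n j \<subseteq> AA n (n - j)" using Phi by auto
  moreover have "finite (AA n (n - j))"
  proof -
    have "AA n (n - j) \<subseteq> C_pm n \<times> UNIV" unfolding AA_def by auto
    moreover have "finite (C_pm n \<times> (UNIV :: bool set))" using C_fin by simp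
    ultimately show ?thesis by (rule finite_subset)
  qed
  ultimately show ?thesis by (rule card_inj_on_le)
qed

lemma AA_eq:
  assumes n1: "1 \<le> n" and nm: "n mod 4 \<noteq> 2" and j: "j \<le> n"
  shows "card (AA n j) = card (AA n (n - j))"
proof -
  have a: "card (AA n j) \<le> card (AA n (n - j))" by (rule AA_le[OF n1 nm j])
  have b: "card (AA n (n - j)) \<le> card (AA n (n - (n - j)))" by (rule AA_le[OF n1 nm]) simp
  have "n - (n - j) = j" using j by simp
  then show ?thesis using a b by simp
qed

lemma Lambda_out: "1 \<le> n \<Longrightarrow> i \<notin> {1..n} \<Longrightarrow> Lambda n i = 0"
proof -
  assume n1: "1 \<le> n" and i: "i \<notin> {1..n}"
  have E: "{f \<in> C_pm n. f i = n} = {}"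
  proof -
    have "f i \<noteq> n" if "f \<in> C_pm n" for f
    proof -
      have "f i = i" using permutes_not_in[OF C_perm[OF that] i] .
      moreover have "i \<noteq> n" using i n1 by auto
      ultimately show ?thesis by simp
    qed
    then show "{f \<in> C_pm n. f i = n} = {}" by auto
  qed
  show ?thesis unfolding Lambda_def E by simp
qed

lemma sym_all:
  assumes n1: "1 \<le> n" and nm: "n mod 4 \<noteq> 2"
  shows "i \<le> n + 1 \<Longrightarrow> Lambda n i = Lambda n (n + 1 - i)"
proof (induction i)
  case 0
  then show ?case using Lambda_out[OF n1, of 0] Lambda_out[OF n1, of "n+1"] by simp
next
  case (Suc i)
  have A1: "card (AA n i) = Lambda n i + Lambda n (Suc i)" by (rule card_AA[OF n1])
  have A2: "card (AA n (n - i)) = Lambda n (n - i) + Lambda n (Suc (n - i))" by (rule card_AA[OF n1])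
  have ilen: "i \<le> n" using Suc.prems by simp
  have E: "card (AA n i) = card (AA n (n - i))" by (rule AA_eq[OF n1 nm ilen])
  have IH: "Lambda n i = Lambda n (n + 1 - i)" using Suc.IH Suc.prems by simp
  have "Suc (n - i) = n + 1 - i" using Suc.prems by simp
  then have D: "Lambda n (Suc (n - i)) = Lambda n (n + 1 - i)" by (rule arg_cong)
  have "Lambda n (Suc i) = Lambda n (n - i)" using A1 A2 E IH D by linarith
  moreover have "n + 1 - Suc i = n - i" by simp
  ultimately show ?case by (simp only:)
qed

theorem lemma4p3:
  fixes n i :: nat
  assumes "n \<ge> 1" and "n mod 4 \<noteq> 2" and "i \<in> {1..n}"
  shows "Lambda n i = Lambda n (n - i + 1)"
proof -
  have "Lambda n i = Lambda n (n + 1 - i)" using sym_all[OF assms(1) assms(2), of i] assms(3) by simp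
  moreover have "n + 1 - i = n - i + 1" using assms(3) by (simp add: Suc_diff_le)
  ultimately show ?thesis by simp
qed


end
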